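(* Let $(R,B)\in\mathcal{D}_d$ with $R=\mathrm{diag}(m_1,\dots,m_d)$ and $m_1,\dots,m_d\ge d+1$. Let $(p_b)_{b\in B}$ be positive weights and $\lambda=\sum_{b\in B}p_b\delta_b$. Let $\mu$ be a finite nonzero Borel measure on $\mathbb{R}^d$ with $\operatorname{spt}(\mu)\subseteq[0,1]^d$, and set $\nu=(\lambda*\mu)\circ R$, i.e., $\nu(F)=(\lambda*\mu)(RF)$ for Borel $F$. Then there is a Borel set $E\subseteq\mathbb{R}^d$ with $\nu(E)>0$ and $\nu(E+n)=0$ for all $n\in\mathbb{Z}^d\setminus\{\mathbf{0}\}$.
   Context: $\mathcal{D}_d$ is the set of pairs $(R,B)$ with $R=\mathrm{diag}(m_1,\dots,m_d)$, $m_1,\dots,m_d\ge2$ integers, and $B$ a nonempty subset of $\{0,\dots,m_1-1\}\times\cdots\times\{0,\dots,m_d-1\}$. $\operatorname{spt}(\mu)$ denotes the support of $\mu$ (smallest closed set of full measure). *)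

theory Defs
  imports "HOL-Analysis.Analysis" "HOL-Probability.Probability"
begin

text \<open>Support of a Borel measure: the smallest closed set of full measure,
  i.e. the intersection of all closed sets whose complement is null.\<close>
definition spt :: "('a::topological_space) measure \<Rightarrow> 'a set" where
  "spt M = \<Inter>{C. closed C \<and> emeasure M (UNIV - C) = 0}"

text \<open>The discrete measure lambda = sum over b in B of p b times the Dirac mass at b.\<close>
definition weighted_dirac :: "('a::topological_space) set \<Rightarrow> ('a \<Rightarrow> real) \<Rightarrow> 'a measure" where
  "weighted_dirac B p =
     measure_of UNIV (sets borel) (\<lambda>A. \<Sum>b\<in>B. ennreal (p b) * indicator A b)"

text \<open>Convolution of two Borel measures on a vector space: pushforward of the
  product measure under addition.\<close>
definition conv :: "('a::real_normed_vector) measure \<Rightarrow> 'a measure \<Rightarrow> 'a measure" where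
  "conv M N = distr (M \<Otimes>\<^sub>M N) borel (\<lambda>(x, y). x + y)"

text \<open>The diagonal matrix diag(m_1,...,m_d).\<close>
definition diag_mat :: "('n::finite \<Rightarrow> nat) \<Rightarrow> real^'n^'n" where
  "diag_mat m = (\<chi> i j. if i = j then real (m i) else 0)"

text \<open>Pullback M o R: (M o R)(F) = M(R F) for Borel F.\<close>
definition pullback_mat :: "(real^'n::finite) measure \<Rightarrow> real^'n^'n \<Rightarrow> (real^'n) measure" where
  "pullback_mat M R = measure_of UNIV (sets borel) (\<lambda>F. emeasure M ((\<lambda>x. R *v x) ` F))"

end

theory Submission
  imports Defs
begin

lemma coord:
  fixes x x' w :: real and M :: nat
  assumes "x \<in> real ` {..<M}" "x' \<in> real ` {..<M}" "w \<in> \<int>" "\<bar>x - x' + real M * w\<bar> \<le> 1"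
  shows "(real M - 1 - 2*x) * (x - x' + real M * w) - ((2*x' - real M + 1)^2 - (2*x - real M + 1)^2)/4
          \<ge> (if w = 0 then -1 else real M - 1)"
proof -
  obtain k where k: "k < M" "x = real k" using assms(1) by auto
  obtain k' where k': "k' < M" "x' = real k'" using assms(2) by auto
  obtain z where z: "w = of_int z" using assms(3) Ints_cases by blast
  have a: "\<bar>int k - int k' + int M * z\<bar> \<le> 1"
  proof -
    have "\<bar>real_of_int (int k - int k' + int M * z)\<bar> \<le> 1" using assms(4) k k' z by simp
    then show ?thesis by linarith
  qed
  have z1: "z \<le> 1"
  proof (rule ccontr)
    assume "\<not> z \<le> 1" then have "int M * z \<ge> int M * 2" by (intro mult_left_mono) auto
    then show False using a k k' by linarith
  qed
  have z2: "z \<ge> -1"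
  proof (rule ccontr)
    assume "\<not> z \<ge> -1" then have "int M * z \<le> int M * (-2)" by (intro mult_left_mono) auto
    then show False using a k k' by linarith
  qed
  define u where "u = int k - int k' + int M * z"
  have u: "u \<in> {-1,0,1}" using a unfolding u_def by auto
  have zc: "z \<in> {-1,0,1}" using z1 z2 by auto
  have kk: "real k' = real k - of_int u + real M * of_int z" unfolding u_def by simp
  have xv: "x - x' + real M * w = of_int u" using k k' z unfolding u_def by simp
  have ik: "int k' = int k - u + int M * z" unfolding u_def by simp
  have x'e: "x' = real k - of_int u + real M * of_int z" using kk k' by simp
  have goal: "(real M - 1 - 2*real k) * of_int u - ((2*(real k - of_int u + real M * of_int z) - real M + 1)^2 - (2*real k - real M + 1)^2)/4
          \<ge> (if z = 0 then -1 else real M - 1)"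
  proof -
    consider "z = 0" | "z = 1" | "z = -1" using zc by auto
    then show ?thesis
    proof cases
      case 1
      then show ?thesis using u by (auto simp: power2_eq_square field_simps)
    next
      case 2
      then have "k = 0" "u = 1" using ik k k' u by auto
      then show ?thesis using 2 by (simp add: power2_eq_square algebra_simps)
    next
      case 3
      then have "k = M - 1" "u = -1" using ik k k' u by auto
      then show ?thesis using 3 k by (simp add: power2_eq_square algebra_simps of_nat_diff)
    qed
  qed
  show ?thesis using goal xv x'e k(2) z by simp
qed

lemma diag_mult: "diag_mat m *v x = (\<chi> i. real (m i) * x $ i)"
proof -
  have "\<And>i. (\<Sum>j\<in>UNIV. (if i = j then real (m i) else 0) * x $ j) = real (m i) * x $ i"
  proof -
    fix i
    have "(\<Sum>j\<in>UNIV. (if i = j then real (m i) else 0) * x $ j) = (\<Sum>j\<in>UNIV. if i = j then real (m i) * x $ j else 0)"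
      by (rule sum.cong) auto
    then show "(\<Sum>j\<in>UNIV. (if i = j then real (m i) else 0) * x $ j) = real (m i) * x $ i" by simp
  qed
  then show ?thesis by (simp add: diag_mat_def matrix_vector_mult_def vec_eq_iff)
qed

lemma finB:
  fixes B :: "(real^'n::finite) set"
  assumes "B \<subseteq> {b. \<forall>i. b $ i \<in> real ` {..<m i}}"
  shows "finite B"
proof -
  have "{b::real^'n. \<forall>i. b $ i \<in> real ` {..<m i}} \<subseteq> (\<lambda>f. \<chi> i. f i) ` (PiE UNIV (\<lambda>i. real ` {..<m i}))"
  proof
    fix b :: "real^'n" assume "b \<in> {b. \<forall>i. b $ i \<in> real ` {..<m i}}"
    then show "b \<in> (\<lambda>f. \<chi> i. f i) ` (PiE UNIV (\<lambda>i. real ` {..<m i}))"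
      by (intro image_eqI[of _ _ "vec_nth b"]) (auto simp: PiE_iff vec_lambda_eta)
  qed
  moreover have "finite (PiE (UNIV::'n set) (\<lambda>i. real ` {..<m i}))" by (intro finite_PiE) auto
  ultimately show ?thesis using assms finite_subset by (metis (no_types, lifting) finite_imageI)
qed

lemma wd_sets: "sets (weighted_dirac B p) = sets borel"
proof -
  have "sets (weighted_dirac B p) = sigma_sets UNIV (sets borel)"
    unfolding weighted_dirac_def by (rule sets_measure_of) auto
  also have "\<dots> = sets borel" using sets.sigma_sets_eq[of borel] by simp
  finally show ?thesis .
qed

lemma wd_emeasure:
  assumes "X \<in> sets borel"
  shows "emeasure (weighted_dirac B p) X = (\<Sum>b\<in>B. ennreal (p b) * indicator X b)"
  unfolding weighted_dirac_def
proof (rule emeasure_measure_of_sigma)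
  show "sigma_algebra UNIV (sets borel)" using sets.sigma_algebra_axioms[of borel] by simp
  show "positive (sets borel) (\<lambda>A. \<Sum>b\<in>B. ennreal (p b) * indicator A b)" by (simp add: positive_def)
  show "countably_additive (sets borel) (\<lambda>A. \<Sum>b\<in>B. ennreal (p b) * indicator A b)"
    unfolding countably_additive_def
  proof (intro allI impI)
    fix A :: "nat \<Rightarrow> 'a set" assume disj: "disjoint_family A"
    have "(\<Sum>i. \<Sum>b\<in>B. ennreal (p b) * indicator (A i) b) = (\<Sum>b\<in>B. \<Sum>i. ennreal (p b) * indicator (A i) b)"
      by (rule suminf_sum[OF summableI])
    also have "\<dots> = (\<Sum>b\<in>B. ennreal (p b) * indicator (\<Union>(range A)) b)"
      using suminf_indicator[OF disj] by simp
    finally show "(\<Sum>i. \<Sum>b\<in>B. ennreal (p b) * indicator (A i) b) = (\<Sum>b\<in>B. ennreal (p b) * indicator (\<Union>(range A)) b)" .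
  qed
  show "X \<in> sets borel" by fact
qed

lemma wd_finite:
  assumes "finite B"
  shows "finite_measure (weighted_dirac B p)"
proof
  have "space (weighted_dirac B p) = UNIV" unfolding weighted_dirac_def by (simp add: space_measure_of_conv)
  then show "emeasure (weighted_dirac B p) (space (weighted_dirac B p)) \<noteq> \<infinity>"
    using assms by (simp add: wd_emeasure ennreal_mult_eq_top_iff)
qed

lemma trans_meas:
  fixes S :: "'a::euclidean_space set"
  assumes "S \<in> sets borel"
  shows "{y. b + y \<in> S} \<in> sets borel"
proof -
  have "(\<lambda>y. b + y) \<in> borel_measurable borel"
    by (intro borel_measurable_continuous_onI continuous_intros)
  from measurable_sets[OF this assms] show ?thesis by (simp add: vimage_def)
qed

lemma trans_meas2:
  fixes S :: "'a::euclidean_space set"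
  assumes "S \<in> sets borel"
  shows "{x. x + y \<in> S} \<in> sets borel"
  using trans_meas[OF assms, of y] by (simp add: add.commute)

lemma conv_formula:
  fixes \<mu> :: "('a::euclidean_space) measure"
  assumes fin: "finite B" and mb: "sets \<mu> = sets borel" and mf: "finite_measure \<mu>" and S: "S \<in> sets borel"
  shows "emeasure (conv (weighted_dirac B p) \<mu>) S = (\<Sum>b\<in>B. ennreal (p b) * emeasure \<mu> {y. b + y \<in> S})"
proof -
  let ?L = "weighted_dirac B p"
  have m0: "(\<lambda>(x,y). x + y) \<in> (borel \<Otimes>\<^sub>M borel) \<rightarrow>\<^sub>M (borel::'a measure)" by measurable
  have meas: "(\<lambda>(x,y). x + y) \<in> (?L \<Otimes>\<^sub>M \<mu>) \<rightarrow>\<^sub>M (borel::'a measure)"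
  proof -
    have eq: "(?L \<Otimes>\<^sub>M \<mu>) \<rightarrow>\<^sub>M (borel::'a measure) = (borel \<Otimes>\<^sub>M borel) \<rightarrow>\<^sub>M (borel::'a measure)"
      by (rule measurable_cong_sets[OF sets_pair_measure_cong[OF wd_sets[of B p] mb] refl])
    show ?thesis unfolding eq by (rule m0)
  qed
  interpret L: finite_measure ?L using wd_finite[OF fin] .
  interpret M: finite_measure \<mu> by fact
  interpret P: pair_sigma_finite ?L \<mu>
    unfolding pair_sigma_finite_def using L.sigma_finite_measure_axioms M.sigma_finite_measure_axioms by auto
  have spL: "space ?L = UNIV" unfolding weighted_dirac_def by (simp add: space_measure_of_conv)
  have spM: "space \<mu> = UNIV" using sets_eq_imp_space_eq[OF mb] by simp
  have "emeasure (conv ?L \<mu>) S = emeasure (?L \<Otimes>\<^sub>M \<mu>) ((\<lambda>(x,y). x+y) -` S \<inter> space (?L \<Otimes>\<^sub>M \<mu>))"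
    unfolding conv_def by (rule emeasure_distr[OF meas S])
  also have "\<dots> = (\<integral>\<^sup>+ y. emeasure ?L ((\<lambda>x. (x,y)) -` ((\<lambda>(x,y). x+y) -` S \<inter> space (?L \<Otimes>\<^sub>M \<mu>))) \<partial>\<mu>)"
    by (rule P.emeasure_pair_measure_alt2) (rule measurable_sets[OF meas S])
  also have "\<dots> = (\<integral>\<^sup>+ y. (\<Sum>b\<in>B. ennreal (p b) * indicator {y. b + y \<in> S} y) \<partial>\<mu>)"
  proof (rule nn_integral_cong)
    fix y
    have "(\<lambda>x. (x,y)) -` ((\<lambda>(x,y). x+y) -` S \<inter> space (?L \<Otimes>\<^sub>M \<mu>)) = {x. x + y \<in> S}"
      by (auto simp: space_pair_measure spL spM)
    moreover have "\<And>b. indicator {x. x + y \<in> S} b = (indicator {y. b + y \<in> S} y :: ennreal)"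
      by (simp add: indicator_def)
    ultimately show "emeasure ?L ((\<lambda>x. (x,y)) -` ((\<lambda>(x,y). x+y) -` S \<inter> space (?L \<Otimes>\<^sub>M \<mu>))) = (\<Sum>b\<in>B. ennreal (p b) * indicator {y. b + y \<in> S} y)"
      using wd_emeasure[OF trans_meas2[OF S, of y]] by simp
  qed
  also have "\<dots> = (\<Sum>b\<in>B. ennreal (p b) * emeasure \<mu> {y. b + y \<in> S})"
  proof -
    have ms: "\<And>b. {y. b + y \<in> S} \<in> sets \<mu>" using trans_meas[OF S] mb by simp
    have mm: "\<And>b. (\<lambda>y. ennreal (p b) * indicator {y. b + y \<in> S} y) \<in> borel_measurable \<mu>"
      by (intro borel_measurable_times_ennreal borel_measurable_const borel_measurable_indicator ms)
    show ?thesis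
      by (subst nn_integral_sum) (auto simp: ms mm nn_integral_cmult_indicator)
  qed
  finally show ?thesis .
qed

lemma spt_null:
  fixes \<mu> :: "('a::{second_countable_topology}) measure"
  assumes mb: "sets \<mu> = sets borel" and sub: "spt \<mu> \<subseteq> K" and cK: "closed K"
  shows "emeasure \<mu> (UNIV - K) = 0"
proof -
  let ?F = "(\<lambda>C. UNIV - C) ` {C. closed C \<and> emeasure \<mu> (UNIV - C) = 0}"
  have opn: "\<And>S. S \<in> ?F \<Longrightarrow> open S" by auto
  obtain F' where F': "F' \<subseteq> ?F" "countable F'" "\<Union>F' = \<Union>?F" using Lindelof[OF opn] by blast
  have "(\<Union>S\<in>F'. S) \<in> null_sets \<mu>"
  proof (rule null_sets_UN'[OF F'(2)])
    fix S assume "S \<in> F'"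
    then obtain C where "closed C" "emeasure \<mu> (UNIV - C) = 0" "S = UNIV - C" using F'(1) by auto
    then show "S \<in> null_sets \<mu>" using mb by (auto simp: null_sets_def)
  qed
  then have N: "\<Union>?F \<in> null_sets \<mu>" using F'(3) by simp
  have "UNIV - K \<subseteq> \<Union>?F"
  proof
    fix x assume "x \<in> UNIV - K"
    then have "x \<notin> spt \<mu>" using sub by auto
    then obtain C where "closed C" "emeasure \<mu> (UNIV - C) = 0" "x \<notin> C" unfolding spt_def by auto
    then show "x \<in> \<Union>?F" by auto
  qed
  moreover have "UNIV - K \<in> sets \<mu>" using cK mb by auto
  ultimately have "UNIV - K \<in> null_sets \<mu>" using null_sets_subset[OF N] by blast
  then show ?thesis by auto
qed

lemma diag_inj:
  assumes "\<forall>i. m i > 0" "diag_mat m *v x = diag_mat m *v y"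
  shows "x = y"
proof -
  have nz: "\<And>i. real (m i) \<noteq> 0" using assms(1) by (metis gr_implies_not0 of_nat_0_eq_iff)
  have "\<forall>i. real (m i) * x$i = real (m i) * y$i" using assms(2) by (simp add: diag_mult vec_eq_iff)
  moreover have "\<And>i. m i \<noteq> 0" using assms(1) by (metis gr_implies_not0)
  ultimately show ?thesis by (simp add: vec_eq_iff)
qed

lemma diag_img:
  assumes "\<forall>i. m i > 0"
  shows "(\<lambda>x. diag_mat m *v x) ` F = {y. (\<chi> i. y $ i / real (m i)) \<in> F}"
proof -
  have 1: "\<And>x. (\<chi> i. (diag_mat m *v x) $ i / real (m i)) = x" using assms by (simp add: diag_mult vec_eq_iff)
  have 2: "\<And>y. diag_mat m *v (\<chi> i. y $ i / real (m i)) = y" using assms by (simp add: diag_mult vec_eq_iff)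
  show ?thesis
    apply (auto simp: 1)
    by (metis 2 image_eqI)
qed

lemma diag_img_meas:
  assumes "\<forall>i. m i > 0" "F \<in> sets borel"
  shows "(\<lambda>x. diag_mat m *v x) ` F \<in> sets borel"
proof -
  have "(\<lambda>y::real^'a. (\<chi> i. y $ i / real (m i))) \<in> borel_measurable borel"
  proof -
    have nz: "\<And>i. real (m i) \<noteq> 0" using assms(1) by (metis gr_implies_not0 of_nat_0_eq_iff)
    have nz2: "\<And>i. m i \<noteq> 0" using assms(1) by (metis gr_implies_not0)
    show ?thesis by (auto simp: nz2 intro!: borel_measurable_continuous_onI continuous_intros)
  qed
  from measurable_sets[OF this assms(2)] show ?thesis unfolding diag_img[OF assms(1)] by (simp add: vimage_def)
qed

lemma pb_formula:
  fixes M :: "(real^'n::finite) measure"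
  assumes mb: "sets M = sets borel" and mpos: "\<forall>i. m i > 0" and F: "F \<in> sets borel"
  shows "emeasure (pullback_mat M (diag_mat m)) F = emeasure M ((\<lambda>x. diag_mat m *v x) ` F)"
  unfolding pullback_mat_def
proof (rule emeasure_measure_of_sigma)
  show "sigma_algebra UNIV (sets borel)" using sets.sigma_algebra_axioms[of borel] by simp
  show "positive (sets borel) (\<lambda>F. emeasure M ((\<lambda>x. diag_mat m *v x) ` F))" by (simp add: positive_def)
  show "countably_additive (sets borel) (\<lambda>F. emeasure M ((\<lambda>x. diag_mat m *v x) ` F))"
    unfolding countably_additive_def
  proof (intro allI impI)
    fix A :: "nat \<Rightarrow> (real^'n) set" assume r: "range A \<subseteq> sets borel" and disj: "disjoint_family A"
    have r2: "range (\<lambda>i. (\<lambda>x. diag_mat m *v x) ` A i) \<subseteq> sets M"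
      using r diag_img_meas[OF mpos] mb by auto
    have d2: "disjoint_family (\<lambda>i. (\<lambda>x. diag_mat m *v x) ` A i)"
      using disj diag_inj[OF mpos] unfolding disjoint_family_on_def by blast
    show "(\<Sum>i. emeasure M ((\<lambda>x. diag_mat m *v x) ` A i)) = emeasure M ((\<lambda>x. diag_mat m *v x) ` \<Union>(range A))"
      using suminf_emeasure[OF r2 d2] by (simp add: image_UN)
  qed
  show "F \<in> sets borel" by fact
qed


theorem theorem4p1:
  fixes m :: "'n::finite \<Rightarrow> nat"
    and B :: "(real^'n) set"
    and p :: "real^'n \<Rightarrow> real"
    and \<mu> :: "(real^'n) measure"
  assumes m_ge: "\<And>i. m i \<ge> CARD('n) + 1"
    and B_ne: "B \<noteq> {}"
    and B_sub: "B \<subseteq> {b. \<forall>i. b $ i \<in> real ` {..<m i}}"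
    and p_pos: "\<And>b. b \<in> B \<Longrightarrow> p b > 0"
    and \<mu>_borel: "sets \<mu> = sets borel"
    and \<mu>_fin: "emeasure \<mu> UNIV < \<infinity>"
    and \<mu>_nz: "emeasure \<mu> UNIV \<noteq> 0"
    and \<mu>_spt: "spt \<mu> \<subseteq> {x. \<forall>i. 0 \<le> x $ i \<and> x $ i \<le> 1}"
  shows "\<exists>E \<in> sets borel.
           emeasure (pullback_mat (conv (weighted_dirac B p) \<mu>) (diag_mat m)) E > 0 \<and>
           (\<forall>n. (\<forall>i. n $ i \<in> \<int>) \<and> n \<noteq> 0 \<longrightarrow>
              emeasure (pullback_mat (conv (weighted_dirac B p) \<mu>) (diag_mat m))
                ((\<lambda>x. x + n) ` E) = 0)"
proof -
  let ?\<nu> = "pullback_mat (conv (weighted_dirac B p) \<mu>) (diag_mat m)"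
  let ?d = "CARD('n)"
  have mpos: "\<forall>i. m i > 0"
  proof
    fix i show "m i > 0" using m_ge[of i] by linarith
  qed
  have finB: "finite B" using finB[OF B_sub] .
  define cube where "cube = {x::real^'n. \<forall>i. 0 \<le> x$i \<and> x$i \<le> 1}"
  have cube_closed: "closed cube" unfolding cube_def
    by (intro closed_Collect_all closed_Collect_conj closed_Collect_le continuous_intros)
  have spM: "space \<mu> = UNIV" using sets_eq_imp_space_eq[OF \<mu>_borel] by simp
  have mfin: "finite_measure \<mu>" by (rule finite_measureI) (use \<mu>_fin spM in auto)
  have null: "emeasure \<mu> (UNIV - cube) = 0" using spt_null[OF \<mu>_borel _ cube_closed] \<mu>_spt cube_def by simp
  have cube_meas: "cube \<in> sets \<mu>" using cube_closed \<mu>_borel by simp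
  have cubeC_meas: "UNIV - cube \<in> sets \<mu>" using cube_closed \<mu>_borel by auto
  have mu_cube: "emeasure \<mu> cube \<noteq> 0"
  proof
    assume "emeasure \<mu> cube = 0"
    moreover have "emeasure \<mu> (cube \<union> (UNIV - cube)) \<le> emeasure \<mu> cube + emeasure \<mu> (UNIV - cube)"
      by (rule emeasure_subadditive[OF cube_meas cubeC_meas])
    ultimately have "emeasure \<mu> UNIV \<le> 0" using null by simp
    then show False using \<mu>_nz by simp
  qed
  define f where "f b = (\<Sum>i\<in>UNIV. (2 * b$i - real (m i) + 1)^2)" for b :: "real^'n"
  obtain b where bB: "b \<in> B" and bmin: "\<And>b'. b' \<in> B \<Longrightarrow> f b \<le> f b'"
  proof -
    have "Min (f ` B) \<in> f ` B" using finB B_ne by (intro Min_in) auto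
    then obtain b where "b \<in> B" "f b = Min (f ` B)" by auto
    moreover have "\<And>b'. b' \<in> B \<Longrightarrow> Min (f ` B) \<le> f b'" using finB by (intro Min_le) auto
    ultimately show ?thesis using that by metis
  qed
  define c where "c i = real (m i) - 1 - 2 * b$i" for i
  define ell where "ell x = (\<Sum>i\<in>UNIV. c i * x$i)" for x :: "real^'n"
  have ell_add: "\<And>x y. ell (x + y) = ell x + ell y" by (simp add: ell_def algebra_simps sum.distrib)
  have ell_cont: "continuous_on UNIV ell" unfolding ell_def by (intro continuous_intros)
  have key: "\<And>b' n. b' \<in> B \<Longrightarrow> (\<forall>i. n$i \<in> \<int>) \<Longrightarrow> n \<noteq> 0 \<Longrightarrow> (\<forall>i. \<bar>b$i - b'$i + real (m i) * n$i\<bar> \<le> 1)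
      \<Longrightarrow> ell (\<chi> i. b$i - b'$i + real (m i) * n$i) \<ge> 1"
  proof -
    fix b' n assume b': "b' \<in> B" and nZ: "\<forall>i. n$i \<in> \<int>" and n0: "n \<noteq> 0"
      and bd: "\<forall>i. \<bar>b$i - b'$i + real (m i) * n$i\<bar> \<le> 1"
    define q where "q i = (real (m i) - 1 - 2*b$i) * (b$i - b'$i + real (m i) * n$i)
        - ((2*b'$i - real (m i) + 1)^2 - (2*b$i - real (m i) + 1)^2)/4" for i
    have qge: "q i \<ge> (if n$i = 0 then -1 else real (m i) - 1)" for i
      unfolding q_def by (rule coord) (use B_sub bB b' nZ bd in auto)
    obtain j where j: "n$j \<noteq> 0" using n0 by (metis vec_eq_iff zero_index)
    have d1: "?d \<ge> 1" by (simp add: Suc_leI)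
    have "(\<Sum>i\<in>UNIV. q i) = q j + (\<Sum>i\<in>UNIV - {j}. q i)" by (simp add: sum.remove)
    also have "\<dots> \<ge> real ?d + (\<Sum>i\<in>UNIV - {j}. (-1::real))"
    proof (rule add_mono)
      show "real ?d \<le> q j" using qge[of j] j m_ge[of j] by simp
      show "(\<Sum>i\<in>UNIV - {j}. (-1::real)) \<le> (\<Sum>i\<in>UNIV - {j}. q i)"
      proof (rule sum_mono)
        fix i
        show "-1 \<le> q i" using qge[of i] m_ge[of i] by (auto split: if_splits)
      qed
    qed
    finally have "(\<Sum>i\<in>UNIV. q i) \<ge> real ?d - real (?d - 1)" by (simp add: card_Diff_singleton)
    then have sq: "(\<Sum>i\<in>UNIV. q i) \<ge> 1" using d1 by (simp add: of_nat_diff)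
    have "f b' - f b \<ge> 0" using bmin[OF b'] by simp
    have "ell (\<chi> i. b$i - b'$i + real (m i) * n$i) = (\<Sum>i\<in>UNIV. q i + ((2*b'$i - real (m i) + 1)^2 - (2*b$i - real (m i) + 1)^2)/4)"
      unfolding ell_def c_def q_def by (rule sum.cong) auto
    also have "\<dots> = (\<Sum>i\<in>UNIV. q i) + (f b' - f b)/4"
      unfolding f_def by (simp add: sum.distrib sum_divide_distrib[symmetric] sum_subtractf)
    finally show "ell (\<chi> i. b$i - b'$i + real (m i) * n$i) \<ge> 1" using sq \<open>f b' - f b \<ge> 0\<close>
      by (metis add_increasing2 divide_nonneg_pos zero_less_numeral)
  qed
  have ell_open: "\<And>t. {x. t < ell x} \<in> sets borel"
    by (intro borel_open open_Collect_less ell_cont continuous_intros)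
  define Mx where "Mx = (\<Sum>i\<in>UNIV. \<bar>c i\<bar>)"
  have ell_bound: "ell x \<le> Mx \<and> - Mx \<le> ell x" if "x \<in> cube" for x
  proof -
    have "\<bar>ell x\<bar> \<le> (\<Sum>i\<in>UNIV. \<bar>c i * x$i\<bar>)" unfolding ell_def by (rule sum_abs)
    also have "\<dots> \<le> Mx" unfolding Mx_def
    proof (rule sum_mono)
      fix i
      have "\<bar>x$i\<bar> \<le> 1" using that unfolding cube_def by auto
      then show "\<bar>c i * x$i\<bar> \<le> \<bar>c i\<bar>" by (simp add: abs_mult mult_left_le)
    qed
    finally show ?thesis by linarith
  qed
  define S where "S = {t::real. emeasure \<mu> {x. ell x > t} > 0}"
  have S_bdd: "t < Mx" if "t \<in> S" for t
  proof (rule ccontr)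
    assume "\<not> t < Mx"
    then have "{x. ell x > t} \<subseteq> UNIV - cube" using ell_bound by force
    then have "emeasure \<mu> {x. ell x > t} \<le> emeasure \<mu> (UNIV - cube)" by (intro emeasure_mono cubeC_meas)
    then show False using that null unfolding S_def by simp
  qed
  have S_ne: "- Mx - 1 \<in> S"
  proof -
    have "cube \<subseteq> {x. ell x > - Mx - 1}" using ell_bound by force
    then have "emeasure \<mu> cube \<le> emeasure \<mu> {x. ell x > - Mx - 1}" using ell_open \<mu>_borel by (intro emeasure_mono) auto
    moreover have "0 < emeasure \<mu> cube" using mu_cube by (simp add: zero_less_iff_neq_zero)
    ultimately have "0 < emeasure \<mu> {x. ell x > - Mx - 1}" by (rule order.strict_trans2[rotated])
    then show ?thesis unfolding S_def by simp
  qed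
  have bddS: "bdd_above S" using S_bdd by (meson bdd_aboveI less_imp_le)
  define T where "T = Sup S"
  obtain s where sS: "s \<in> S" and sT: "T - 1/2 < s"
    using less_cSup_iff[of S "T - 1/2"] S_ne bddS unfolding T_def by auto
  have pos: "emeasure \<mu> {x. ell x > T - 1/2} > 0"
  proof -
    have "emeasure \<mu> {x. ell x > s} \<le> emeasure \<mu> {x. ell x > T - 1/2}"
      using ell_open \<mu>_borel sT by (intro emeasure_mono) auto
    then show ?thesis using sS unfolding S_def by (simp add: order_less_le_trans)
  qed
  have zero: "emeasure \<mu> {x. ell x > T + 1/2} = 0"
  proof -
    have "T + 1/2 \<notin> S" using cSup_upper[OF _ bddS] unfolding T_def by force
    then show ?thesis unfolding S_def by (simp add: not_gr_zero)
  qed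
  define A where "A = cube \<inter> {x. ell x > T - 1/2}"
  have A_meas: "A \<in> sets borel" unfolding A_def using cube_closed ell_open by auto
  have A_pos: "emeasure \<mu> A > 0"
  proof -
    have "{x. ell x > T - 1/2} \<subseteq> A \<union> (UNIV - cube)" unfolding A_def by auto
    then have "emeasure \<mu> {x. ell x > T - 1/2} \<le> emeasure \<mu> (A \<union> (UNIV - cube))"
      using A_meas cubeC_meas \<mu>_borel by (intro emeasure_mono) auto
    also have "\<dots> \<le> emeasure \<mu> A + emeasure \<mu> (UNIV - cube)"
      using A_meas cubeC_meas \<mu>_borel by (intro emeasure_subadditive) auto
    finally show ?thesis using pos null by simp
  qed
  define E where "E = {y. (\<chi> i. real (m i) * y$i - b$i) \<in> A}"
  have E_meas: "E \<in> sets borel"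
  proof -
    have "(\<lambda>y::real^'n. (\<chi> i. real (m i) * y$i - b$i)) \<in> borel_measurable borel"
      by (intro borel_measurable_continuous_onI continuous_intros)
    from measurable_sets[OF this A_meas] show ?thesis unfolding E_def by (simp add: vimage_def)
  qed
  have conv_sets: "sets (conv (weighted_dirac B p) \<mu>) = sets borel" unfolding conv_def by simp
  have nu: "\<And>F. F \<in> sets borel \<Longrightarrow> emeasure ?\<nu> F
      = (\<Sum>b'\<in>B. ennreal (p b') * emeasure \<mu> {y. b' + y \<in> (\<lambda>x. diag_mat m *v x) ` F})"
    using pb_formula[OF conv_sets mpos] conv_formula[OF finB \<mu>_borel mfin diag_img_meas[OF mpos]] by simp
  have nz2: "\<And>i. real (m i) \<noteq> 0" using mpos by (metis gr_implies_not0 of_nat_0_eq_iff)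
  show ?thesis
  proof (intro bexI conjI allI impI)
    show "E \<in> sets borel" by fact
    show "emeasure ?\<nu> E > 0"
    proof -
      have sub: "A \<subseteq> {y. b + y \<in> (\<lambda>x. diag_mat m *v x) ` E}"
      proof
        fix y assume yA: "y \<in> A"
        define x where "x = (\<chi> i. (b$i + y$i) / real (m i))"
        have dx: "diag_mat m *v x = b + y" unfolding x_def using nz2 by (simp add: diag_mult vec_eq_iff)
        have "(\<chi> i. real (m i) * x$i - b$i) = y" unfolding x_def using nz2 by (simp add: vec_eq_iff)
        then have "x \<in> E" unfolding E_def using yA by simp
        then show "y \<in> {y. b + y \<in> (\<lambda>x. diag_mat m *v x) ` E}" using dx by (metis (mono_tags) image_eqI mem_Collect_eq)
      qed
      have meas1: "{y. b + y \<in> (\<lambda>x. diag_mat m *v x) ` E} \<in> sets \<mu>"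
        using trans_meas[OF diag_img_meas[OF mpos E_meas]] \<mu>_borel by simp
      have "emeasure \<mu> A \<le> emeasure \<mu> {y. b + y \<in> (\<lambda>x. diag_mat m *v x) ` E}"
        by (rule emeasure_mono[OF sub meas1])
      then have "0 < ennreal (p b) * emeasure \<mu> {y. b + y \<in> (\<lambda>x. diag_mat m *v x) ` E}"
        using A_pos p_pos[OF bB] by (simp add: ennreal_zero_less_mult_iff order_less_le_trans)
      also have "\<dots> \<le> (\<Sum>b'\<in>B. ennreal (p b') * emeasure \<mu> {y. b' + y \<in> (\<lambda>x. diag_mat m *v x) ` E})"
        by (rule member_le_sum[OF bB _ finB]) auto
      finally show ?thesis using nu[OF E_meas] by simp
    qed
    fix n :: "real^'n" assume nprop: "(\<forall>i. n $ i \<in> \<int>) \<and> n \<noteq> 0"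
    have En_eq: "(\<lambda>x. x + n) ` E = {x. - n + x \<in> E}"
    proof (intro set_eqI iffI)
      fix x assume "x \<in> (\<lambda>x. x + n) ` E" then show "x \<in> {x. - n + x \<in> E}" by auto
    next
      fix x assume "x \<in> {x. - n + x \<in> E}"
      then have "- n + x \<in> E" by simp
      moreover have "x = (- n + x) + n" by simp
      ultimately show "x \<in> (\<lambda>x. x + n) ` E" by (rule rev_image_eqI)
    qed
    have En: "(\<lambda>x. x + n) ` E \<in> sets borel" unfolding En_eq by (rule trans_meas[OF E_meas])
    have "emeasure \<mu> {y. b' + y \<in> (\<lambda>x. diag_mat m *v x) ` ((\<lambda>x. x + n) ` E)} = 0" if b': "b' \<in> B" for b'
    proof -
      have "{y. b' + y \<in> (\<lambda>x. diag_mat m *v x) ` ((\<lambda>x. x + n) ` E)} \<subseteq> (UNIV - cube) \<union> {x. ell x > T + 1/2}"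
      proof
        fix y assume "y \<in> {y. b' + y \<in> (\<lambda>x. diag_mat m *v x) ` ((\<lambda>x. x + n) ` E)}"
        then obtain e where eE: "e \<in> E" and ye: "b' + y = diag_mat m *v (e + n)" by auto
        define w where "w = (\<chi> i. real (m i) * e$i - b$i)"
        define v where "v = (\<chi> i. b$i - b'$i + real (m i) * n$i)"
        have wA: "w \<in> A" using eE unfolding E_def w_def by simp
        have yw: "y = w + v"
        proof -
          have "\<And>i. b'$i + y$i = real (m i) * (e$i + n$i)" using ye by (simp add: diag_mult vec_eq_iff)
          then have "\<And>i. y$i = (real (m i) * e$i - b$i) + (b$i - b'$i + real (m i) * n$i)"
            by (simp add: algebra_simps)
          then show ?thesis unfolding w_def v_def by (simp add: vec_eq_iff)
        qed
        show "y \<in> (UNIV - cube) \<union> {x. ell x > T + 1/2}"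
        proof (cases "y \<in> cube")
          case False then show ?thesis by simp
        next
          case True
          have wc: "w \<in> cube" using wA unfolding A_def by simp
          have "\<forall>i. \<bar>b$i - b'$i + real (m i) * n$i\<bar> \<le> 1"
          proof
            fix i
            have "v$i = y$i - w$i" using yw by simp
            moreover have "0 \<le> y$i" "y$i \<le> 1" "0 \<le> w$i" "w$i \<le> 1" using True wc unfolding cube_def by auto
            ultimately show "\<bar>b$i - b'$i + real (m i) * n$i\<bar> \<le> 1" unfolding v_def by simp
          qed
          then have "ell v \<ge> 1" unfolding v_def using key[OF b'] nprop by blast
          moreover have "ell w > T - 1/2" using wA unfolding A_def by simp
          ultimately have "ell y > T + 1/2" using yw ell_add by simp
          then show ?thesis by simp
        qed
      qed
      then have "emeasure \<mu> {y. b' + y \<in> (\<lambda>x. diag_mat m *v x) ` ((\<lambda>x. x + n) ` E)} \<le> emeasure \<mu> ((UNIV - cube) \<union> {x. ell x > T + 1/2})"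
        using cubeC_meas ell_open \<mu>_borel by (intro emeasure_mono) auto
      also have "\<dots> \<le> emeasure \<mu> (UNIV - cube) + emeasure \<mu> {x. ell x > T + 1/2}"
        using cubeC_meas ell_open \<mu>_borel by (intro emeasure_subadditive) auto
      finally show ?thesis using null zero by simp
    qed
    then show "emeasure ?\<nu> ((\<lambda>x. x + n) ` E) = 0" using nu[OF En] by simp
  qed
qed

end
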